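(* There exist $\varepsilon>0$, a constant $\tilde C>0$ and a constant $0<L<1$ such that for all $|u|\le1$, all $|x|\le\rho+\varepsilon$ and all $k\ge0$, $$|\Sigma_k(x,u)|\le\tilde C|u-1|L^k.$$
   Context: Let $y(x)=\sum_{n\ge1}y_nx^n$, $y_n$ the number of unlabelled rooted trees with $n$ vertices; it satisfies $y(x)=x\exp(\sum_{i\ge1}y(x^i)/i)$ and has radius of convergence $\rho\in(0,1)$ with $y(\rho)=1$. Define $y_0(x,u)=uy(x)$, $y_{k+1}(x,u)=x\exp\left(\sum_{i\ge1}y_k(x^i,u^i)/i\right)$, $w_k(x,u)=y_k(x,u)-y(x)$, and $\Sigma_k(x,u)=\sum_{i\ge2}\frac{w_k(x^i,u^i)}{i}$. *)

theory Defs
  imports "HOL-Analysis.Analysis" "HOL-Library.Multiset"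
begin

text \<open>Unlabelled rooted trees: a root together with a multiset of subtrees
  (isomorphism classes of rooted trees).\<close>
datatype rtree = Node "rtree multiset"

primrec nverts :: "rtree \<Rightarrow> nat" where
  "nverts (Node ts) = Suc (sum_mset (image_mset nverts ts))"

definition ycoef :: "nat \<Rightarrow> nat" where
  "ycoef n = card {t. nverts t = n}"

definition ygf :: "complex \<Rightarrow> complex" where
  "ygf x = (\<Sum>n. of_nat (ycoef n) * x ^ n)"

definition rho :: real where
  "rho = real_of_ereal (conv_radius (\<lambda>n. (of_nat (ycoef n) :: complex)))"

primrec yk :: "nat \<Rightarrow> complex \<Rightarrow> complex \<Rightarrow> complex" where
  "yk 0 x u = u * ygf x"
| "yk (Suc k) x u = x * exp (\<Sum>i. yk k (x ^ (i + 1)) (u ^ (i + 1)) / of_nat (i + 1))"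

definition wk :: "nat \<Rightarrow> complex \<Rightarrow> complex \<Rightarrow> complex" where
  "wk k x u = yk k x u - ygf x"

definition Sigmak :: "nat \<Rightarrow> complex \<Rightarrow> complex \<Rightarrow> complex" where
  "Sigmak k x u = (\<Sum>i. wk k (x ^ (i + 2)) (u ^ (i + 2)) / of_nat (i + 2))"

end

theory Submission
  imports Defs
begin


definition msz :: "rtree multiset \<Rightarrow> nat" where
  "msz M = sum_mset (image_mset nverts M)"

lemma nverts_Node: "nverts (Node M) = Suc (msz M)"
  by (simp add: msz_def)

lemma nverts_pos: "nverts t \<ge> 1"
  by (cases t) auto

lemma msz_ge_elem: "t \<in># M \<Longrightarrow> nverts t \<le> msz M"
proof -
  assume "t \<in># M"
  then obtain N where "M = add_mset t N" by (metis mset_add)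
  then show ?thesis by (simp add: msz_def)
qed

lemma size_le_msz: "size M \<le> msz M"
proof (induction M)
  case empty then show ?case by (simp add: msz_def)
next
  case (add x M) then show ?case using nverts_pos[of x] by (simp add: msz_def)
qed

definition TN :: "nat \<Rightarrow> rtree set" where "TN N = {t. nverts t \<le> N}"

lemma finite_TN: "finite (TN N)"
proof (induction N)
  case 0
  have "TN 0 = {}" using nverts_pos by (auto simp: TN_def Suc_le_eq)
  then show ?case by simp
next
  case (Suc N)
  have fin: "finite {M. set_mset M \<subseteq> TN N \<and> size M \<le> N}"
  proof -
    have "{M. set_mset M \<subseteq> TN N \<and> size M \<le> N} = (\<Union>n\<le>N. multisets_of_size (TN N) n)"
      by (auto simp: multisets_of_size_def)
    then show ?thesis using Suc by auto
  qed
  have "TN (Suc N) \<subseteq> Node ` {M. set_mset M \<subseteq> TN N \<and> size M \<le> N}"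
  proof
    fix t assume "t \<in> TN (Suc N)"
    obtain M where t: "t = Node M" by (cases t)
    with \<open>t \<in> TN (Suc N)\<close> have "msz M \<le> N" by (simp add: TN_def msz_def)
    then have "set_mset M \<subseteq> TN N \<and> size M \<le> N"
      using msz_ge_elem size_le_msz[of M] by (force simp: TN_def)
    then show "t \<in> Node ` {M. set_mset M \<subseteq> TN N \<and> size M \<le> N}" using t by auto
  qed
  then show ?case using fin finite_subset by blast
qed

lemma finite_size_eq: "finite {t. nverts t = n}"
  by (rule finite_subset[OF _ finite_TN[of n]]) (auto simp: TN_def)

lemma ycoef_0: "ycoef 0 = 0"
proof -
  have "{t. nverts t = 0} = {}" using nverts_pos by (auto simp: Suc_le_eq)
  then show ?thesis by (simp only: ycoef_def card.empty)
qed

lemma ycoef_1: "ycoef 1 \<ge> 1"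
proof -
  have "Node {#} \<in> {t. nverts t = 1}" by simp
  then have "{t. nverts t = 1} \<noteq> {}" by blast
  then show ?thesis using finite_size_eq[of 1] by (simp add: ycoef_def Suc_le_eq card_gt_0_iff)
qed



definition kids :: "rtree \<Rightarrow> rtree multiset" where "kids t = (case t of Node M \<Rightarrow> M)"

lemma kids_Node[simp]: "kids (Node M) = M" by (simp add: kids_def)

definition CN :: "nat \<Rightarrow> rtree set" where "CN N = Node ` {M. set_mset M \<subseteq> TN N}"

definition PN :: "nat \<Rightarrow> complex \<Rightarrow> complex" where
  "PN N z = (\<Sum>k\<le>N. of_nat (ycoef k) * z ^ k)"

lemma msz_add[simp]: "msz (M + M') = msz M + msz M'"
  by (simp add: msz_def)

lemma msz_rep[simp]: "msz (replicate_mset k s) = k * nverts s"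
  by (simp add: msz_def)

lemma msz_sum: "finite A \<Longrightarrow> msz (\<Sum>s\<in>A. replicate_mset (g s) s) = (\<Sum>s\<in>A. g s * nverts s)"
  by (induction A rule: finite_induct) (auto simp: msz_def)

lemma msz_empty[simp]: "msz {#} = 0" by (simp add: msz_def)

lemma sum_TN: "(\<Sum>s\<in>TN N. z ^ nverts s) = PN N z"
proof -
  have "(\<Sum>s\<in>TN N. z ^ nverts s) = (\<Sum>k\<in>{..N}. \<Sum>s\<in>{s\<in>TN N. nverts s = k}. z ^ nverts s)"
    by (rule sum.group[symmetric]) (use finite_TN[of N] in \<open>auto simp: TN_def\<close>)
  also have "\<dots> = (\<Sum>k\<le>N. of_nat (ycoef k) * z ^ k)"
  proof (rule sum.cong)
    fix k assume "k \<in> {..N}"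
    then have "{s\<in>TN N. nverts s = k} = {s. nverts s = k}" by (auto simp: TN_def)
    then show "(\<Sum>s\<in>{s\<in>TN N. nverts s = k}. z ^ nverts s) = of_nat (ycoef k) * z ^ k"
      by (simp add: ycoef_def)
  qed simp
  finally show ?thesis by (simp add: PN_def)
qed

lemma geom_abs:
  fixes w :: "'a :: {real_normed_field, banach}" assumes "norm w < 1"
  shows "(\<lambda>k. norm (w ^ k)) summable_on UNIV" and "infsum (\<lambda>k. w ^ k) UNIV = 1 / (1 - w)"
proof -
  have s: "summable (\<lambda>k. norm (w ^ k))" using assms by (simp add: norm_power summable_geometric)
  have h: "((\<lambda>k. w ^ k) has_sum (1 / (1 - w))) UNIV"
    by (rule norm_summable_imp_has_sum[OF s]) (use geometric_sums[OF assms] in \<open>simp add: divide_inverse\<close>)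
  show "infsum (\<lambda>k. w ^ k) UNIV = 1 / (1 - w)" using h by (simp add: has_sum_iff)
  have "((\<lambda>k. norm (w ^ k)) has_sum (1 / (1 - norm w))) UNIV"
    by (rule norm_summable_imp_has_sum) (use s geometric_sums[of "norm w"] assms in \<open>auto simp: norm_power divide_inverse\<close>)
  then show "(\<lambda>k. norm (w ^ k)) summable_on UNIV" by (rule has_sum_imp_summable)
qed

lemma nv_norm_lt1: assumes "norm (x::complex) < 1" shows "norm (x ^ nverts s) < 1"
proof -
  have "norm x ^ nverts s \<le> norm x ^ 1" by (rule power_decreasing) (use nverts_pos assms in auto)
  then show ?thesis using assms by (simp add: norm_power)
qed

lemma count_sum_rep: "finite A \<Longrightarrow> count (\<Sum>s\<in>A. replicate_mset (g s) s) y = (if y \<in> A then g y else 0)"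
  by (induction A rule: finite_induct) auto

lemma FIN_has_sum:
  fixes x :: complex assumes x: "norm x < 1"
  shows "((\<lambda>t. x ^ nverts t) has_sum (x * (\<Prod>s\<in>TN N. 1 / (1 - x ^ nverts s)))) (CN N)"
proof -
  define A where "A = TN N"
  have finA: "finite A" by (simp add: A_def finite_TN)
  define B where "B = (\<lambda>_::rtree. UNIV :: nat set)"
  define f where "f s k = (x ^ nverts s) ^ k" for s k
  define fr where "fr s k = (norm x ^ nverts s) ^ k" for s k
  have nx: "norm (norm x ^ nverts s) < 1" for s using nv_norm_lt1[OF x, of s] by (simp add: norm_power)
  have I: "infsum (\<lambda>g. \<Prod>s\<in>A. f s (g s)) (PiE A B) = (\<Prod>s\<in>A. 1 / (1 - x ^ nverts s))"
    unfolding f_def B_def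
    by (subst infsum_prod_PiE_abs[OF finA]) (use geom_abs[OF nv_norm_lt1[OF x]] in auto)
  have Ir: "infsum (\<lambda>g. \<Prod>s\<in>A. fr s (g s)) (PiE A B) = (\<Prod>s\<in>A. 1 / (1 - norm x ^ nverts s))"
    unfolding fr_def B_def
    by (subst infsum_prod_PiE_abs[OF finA]) (use geom_abs[OF nx] in auto)
  have pos: "(\<Prod>s\<in>A. 1 / (1 - norm x ^ nverts s)) > 0"
  proof (rule prod_pos)
    fix s show "0 < 1 / (1 - norm x ^ nverts s)" using nx[of s] by simp
  qed
  have sr: "(\<lambda>g. \<Prod>s\<in>A. fr s (g s)) summable_on (PiE A B)"
  proof (rule ccontr)
    assume "\<not> ?thesis"
    then have "infsum (\<lambda>g. \<Prod>s\<in>A. fr s (g s)) (PiE A B) = 0" by (rule infsum_not_exists)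
    with Ir pos show False by simp
  qed
  have eq: "(\<lambda>g. norm (\<Prod>s\<in>A. f s (g s))) = (\<lambda>g. \<Prod>s\<in>A. fr s (g s))"
    by (rule ext) (simp add: f_def fr_def prod_norm[symmetric] norm_power)
  have "(\<lambda>g. norm (\<Prod>s\<in>A. f s (g s))) summable_on (PiE A B)"
    by (subst eq) (rule sr)
  then have "(\<lambda>g. \<Prod>s\<in>A. f s (g s)) summable_on (PiE A B)" by (rule abs_summable_summable)
  then have H: "((\<lambda>g. \<Prod>s\<in>A. f s (g s)) has_sum (\<Prod>s\<in>A. 1 / (1 - x ^ nverts s))) (PiE A B)"
    using I by (simp add: has_sum_iff)
  then have H2: "((\<lambda>g. x * (\<Prod>s\<in>A. f s (g s))) has_sum (x * (\<Prod>s\<in>A. 1 / (1 - x ^ nverts s)))) (PiE A B)"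
    by (rule has_sum_cmult_right)
  define j where "j g = Node (\<Sum>s\<in>A. replicate_mset (g s) s)" for g :: "rtree \<Rightarrow> nat"
  define i where "i t = restrict (count (kids t)) A" for t
  have "((\<lambda>g. x * (\<Prod>s\<in>A. f s (g s))) has_sum (x * (\<Prod>s\<in>A. 1 / (1 - x ^ nverts s)))) (PiE A B)
     = ((\<lambda>t. x ^ nverts t) has_sum (x * (\<Prod>s\<in>A. 1 / (1 - x ^ nverts s)))) (CN N)"
  proof (rule has_sum_reindex_bij_witness[where i=i and j=j])
    fix g assume g: "g \<in> PiE A B"
    show "i (j g) = g"
    proof
      fix s show "i (j g) s = g s"
        using g by (auto simp: i_def j_def count_sum_rep finA PiE_def extensional_def)
    qed
    have "set_mset (\<Sum>s\<in>A. replicate_mset (g s) s) \<subseteq> A"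
    proof
      fix y assume "y \<in># (\<Sum>s\<in>A. replicate_mset (g s) s)"
      then have "count (\<Sum>s\<in>A. replicate_mset (g s) s) y \<noteq> 0" by (simp del: count_sum)
      then show "y \<in> A" using count_sum_rep[OF finA, of g y] by (auto split: if_splits)
    qed
    then show "j g \<in> CN N"
      by (auto simp: j_def CN_def A_def[symmetric])
    have "nverts (j g) = Suc (\<Sum>s\<in>A. g s * nverts s)"
      by (simp only: j_def nverts_Node msz_sum[OF finA])
    then show "x ^ nverts (j g) = x * (\<Prod>s\<in>A. f s (g s))"
      by (simp add: power_sum f_def power_mult[symmetric] mult.commute)
  next
    fix t assume t: "t \<in> CN N"
    then obtain M where M: "t = Node M" "set_mset M \<subseteq> A" by (auto simp: CN_def A_def)
    show "j (i t) = t"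
      unfolding M(1) j_def i_def
    proof (simp, rule multiset_eqI)
      fix y show "count (\<Sum>s\<in>A. replicate_mset (count M s) s) y = count M y"
        using M(2) by (auto simp: count_sum_rep finA count_eq_zero_iff)
    qed
    show "i t \<in> PiE A B" by (simp add: i_def B_def)
  qed simp
  with H2 show ?thesis by (simp add: A_def)
qed


lemma lnser:
  fixes w :: complex assumes "norm w < 1"
  shows "(\<lambda>n. w ^ (n + 1) / of_nat (n + 1)) sums (- Ln (1 - w))"
proof -
  have "(\<lambda>n. - ((- (- w)) ^ n) / of_nat n) sums ln (1 + - w)"
    by (rule Ln_series') (use assms in simp)
  then have "(\<lambda>n. - (w ^ n / of_nat n)) sums Ln (1 - w)" by simp
  then have "(\<lambda>n. w ^ n / of_nat n) sums (- Ln (1 - w))"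
    using sums_minus by fastforce
  then have "(\<lambda>n. w ^ (Suc n) / of_nat (Suc n)) sums (- Ln (1 - w))"
    by (subst sums_Suc_iff) simp
  then show ?thesis by simp
qed

definition LN :: "nat \<Rightarrow> complex \<Rightarrow> complex" where
  "LN N x = (\<Sum>n. PN N (x ^ (n + 1)) / of_nat (n + 1))"

lemma FIN_prod_exp:
  fixes x :: complex assumes x: "norm x < 1"
  shows "(\<Prod>s\<in>TN N. 1 / (1 - x ^ nverts s)) = exp (LN N x)"
proof -
  have ne: "1 - x ^ nverts s \<noteq> 0" for s using nv_norm_lt1[OF x, of s] by auto
  have "(\<Prod>s\<in>TN N. 1 / (1 - x ^ nverts s)) = (\<Prod>s\<in>TN N. exp (- Ln (1 - x ^ nverts s)))"
    by (rule prod.cong) (simp_all add: exp_minus exp_Ln[OF ne] divide_inverse)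
  also have "\<dots> = exp (\<Sum>s\<in>TN N. - Ln (1 - x ^ nverts s))"
    by (simp add: exp_sum finite_TN)
  also have "(\<Sum>s\<in>TN N. - Ln (1 - x ^ nverts s)) = (\<Sum>s\<in>TN N. \<Sum>n. (x ^ nverts s) ^ (n + 1) / of_nat (n + 1))"
    by (rule sum.cong) (simp_all add: sums_unique[OF lnser[OF nv_norm_lt1[OF x]]])
  also have "\<dots> = (\<Sum>n. \<Sum>s\<in>TN N. (x ^ nverts s) ^ (n + 1) / of_nat (n + 1))"
    by (rule suminf_sum[symmetric]) (use lnser[OF nv_norm_lt1[OF x]] in \<open>auto simp: sums_iff\<close>)
  also have "\<dots> = LN N x"
    unfolding LN_def
  proof (rule suminf_cong)
    fix n
    have "(\<Sum>s\<in>TN N. (x ^ nverts s) ^ (n + 1) / of_nat (n + 1)) = (\<Sum>s\<in>TN N. (x ^ (n + 1)) ^ nverts s) / of_nat (n + 1)"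
    proof -
      have e: "(x ^ nverts s) ^ (n + 1) = (x ^ (n + 1)) ^ nverts s" for s by (metis power_mult mult.commute)
      show ?thesis by (simp only: e sum_divide_distrib)
    qed
    then show "(\<Sum>s\<in>TN N. (x ^ nverts s) ^ (n + 1) / of_nat (n + 1)) = PN N (x ^ (n + 1)) / of_nat (n + 1)"
      by (simp add: sum_TN)
  qed
  finally show ?thesis .
qed

lemma FIN: "norm (x::complex) < 1 \<Longrightarrow> ((\<lambda>t. x ^ nverts t) has_sum (x * exp (LN N x))) (CN N)"
  using FIN_has_sum[of x N] FIN_prod_exp[of x N] by simp



lemma G:
  fixes h :: "nat \<Rightarrow> 'a::{banach, real_normed_field}"
  assumes sm: "summable (\<lambda>n. real (ycoef n) * norm (h n))"
  shows "((\<lambda>t. h (nverts t)) has_sum (\<Sum>n. of_nat (ycoef n) * h n)) UNIV"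
proof -
  define S where "S = Sigma (UNIV::nat set) (\<lambda>n. {t. nverts t = n})"
  define F where "F p = h (fst p)" for p :: "nat \<times> rtree"
  have inner: "((\<lambda>t. F (n, t)) has_sum (of_nat (ycoef n) * h n)) {t. nverts t = n}" for n
    by (rule has_sum_finiteI) (simp_all add: finite_size_eq F_def ycoef_def)
  have innern: "((\<lambda>t. norm (F (n, t))) has_sum (real (ycoef n) * norm (h n))) {t. nverts t = n}" for n
    by (rule has_sum_finiteI) (simp_all add: finite_size_eq F_def ycoef_def)
  have nsm: "summable (\<lambda>n. norm (of_nat (ycoef n) * h n :: 'a))"
    using sm by (simp add: norm_mult)
  have outer: "((\<lambda>n. of_nat (ycoef n) * h n) has_sum (\<Sum>n. of_nat (ycoef n) * h n)) UNIV"
    by (rule norm_summable_imp_has_sum[OF nsm]) (use summable_norm_cancel[OF nsm] in \<open>simp add: summable_sums\<close>)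
  have "(\<lambda>p. norm (F p)) summable_on S"
    unfolding S_def
    by (rule summable_on_SigmaI[where g="\<lambda>n. real (ycoef n) * norm (h n)"])
       (use innern summable_nonneg_imp_summable_on[OF sm] in auto)
  then have "F summable_on S" by (rule abs_summable_summable)
  then have HS: "(F has_sum (\<Sum>n. of_nat (ycoef n) * h n)) S"
    unfolding S_def by (rule has_sum_SigmaI[OF inner outer])
  have "((\<lambda>t. h (nverts t)) has_sum (\<Sum>n. of_nat (ycoef n) * h n)) UNIV = (F has_sum (\<Sum>n. of_nat (ycoef n) * h n)) S"
    by (rule has_sum_reindex_bij_witness[where i=snd and j="\<lambda>t. (nverts t, t)"]) (auto simp: S_def F_def)
  with HS show ?thesis by simp
qed



definition CR :: ereal where "CR = conv_radius (\<lambda>n. (of_nat (ycoef n) :: complex))"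

definition Yr :: "real \<Rightarrow> real" where "Yr t = (\<Sum>n. real (ycoef n) * t ^ n)"

definition PNr :: "nat \<Rightarrow> real \<Rightarrow> real" where "PNr N t = (\<Sum>k\<le>N. real (ycoef k) * t ^ k)"

lemma pow_le:
  fixes r :: real assumes "0 \<le> r" "r \<le> 1" "1 \<le> k" "1 \<le> m"
  shows "(r ^ m) ^ k \<le> r ^ (m - 1) * r ^ k"
proof -
  obtain m' k' where mk: "m = Suc m'" "k = Suc k'" using assms by (metis Suc_le_D One_nat_def)
  have "m - 1 + k \<le> m * k" using mk by (simp add: algebra_simps)
  then have "r ^ (m * k) \<le> r ^ (m - 1 + k)" by (rule power_decreasing) (use assms in auto)
  then show ?thesis by (simp add: power_mult power_add)
qed

lemma term_le:
  fixes r :: real assumes "0 \<le> r" "r \<le> 1" "1 \<le> m" "a 0 = 0" "\<And>k. 0 \<le> a k"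
  shows "a k * (r ^ m) ^ k \<le> r ^ (m - 1) * (a k * r ^ k)"
proof (cases "k = 0")
  case True then show ?thesis using assms by simp
next
  case False
  then have "(r ^ m) ^ k \<le> r ^ (m - 1) * r ^ k" using pow_le assms by auto
  then show ?thesis using assms(5)[of k] by (simp add: mult_left_mono mult.left_commute)
qed

lemma POWfin:
  fixes r :: real assumes "0 \<le> r" "r \<le> 1" "1 \<le> m" "a 0 = 0" "\<And>k. 0 \<le> a k"
  shows "(\<Sum>k\<le>N. a k * (r ^ m) ^ k) \<le> r ^ (m - 1) * (\<Sum>k\<le>N. a k * r ^ k)"
  unfolding sum_distrib_left by (rule sum_mono) (rule term_le, use assms in auto)

lemma POW:
  fixes r :: real assumes "0 \<le> r" "r \<le> 1" "1 \<le> m" "a 0 = 0" "\<And>k. 0 \<le> a k"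
    and sm: "summable (\<lambda>k. a k * r ^ k)"
  shows "summable (\<lambda>k. a k * (r ^ m) ^ k)" "(\<Sum>k. a k * (r ^ m) ^ k) \<le> r ^ (m - 1) * (\<Sum>k. a k * r ^ k)"
proof -
  have b: "a k * (r ^ m) ^ k \<le> r ^ (m - 1) * (a k * r ^ k)" for k by (rule term_le) (use assms in auto)
  have nn: "0 \<le> a k * (r ^ m) ^ k" for k using assms by simp
  have sm2: "summable (\<lambda>k. r ^ (m - 1) * (a k * r ^ k))" using sm by (rule summable_mult)
  show s: "summable (\<lambda>k. a k * (r ^ m) ^ k)"
    by (rule summable_comparison_test[OF _ sm2]) (use b nn in auto)
  have "(\<Sum>k. a k * (r ^ m) ^ k) \<le> (\<Sum>k. r ^ (m - 1) * (a k * r ^ k))"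
    by (rule suminf_le[OF b s sm2])
  also have "\<dots> = r ^ (m - 1) * (\<Sum>k. a k * r ^ k)" using sm by (rule suminf_mult)
  finally show "(\<Sum>k. a k * (r ^ m) ^ k) \<le> r ^ (m - 1) * (\<Sum>k. a k * r ^ k)" .
qed

primrec path :: "nat \<Rightarrow> rtree" where
  "path 0 = Node {#}"
| "path (Suc n) = Node {# path n #}"

lemma nverts_path: "nverts (path n) = Suc n"
  by (induction n) auto

lemma ycoef_pos: assumes "1 \<le> n" shows "1 \<le> ycoef n"
proof -
  obtain m where n: "n = Suc m" using assms by (metis Suc_le_D One_nat_def)
  have "path m \<in> {t. nverts t = n}" by (simp add: nverts_path n)
  then have "{t. nverts t = n} \<noteq> {}" by blast
  then show ?thesis using finite_size_eq[of n] by (simp add: ycoef_def Suc_le_eq card_gt_0_iff)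
qed

lemma CR_le_1: "CR \<le> 1"
proof -
  have "\<not> summable (\<lambda>n. (of_nat (ycoef n) :: complex) * 1 ^ n)"
  proof
    assume "summable (\<lambda>n. (of_nat (ycoef n) :: complex) * 1 ^ n)"
    then have "(\<lambda>n. (of_nat (ycoef n) :: complex)) \<longlonglongrightarrow> 0" by (simp add: summable_LIMSEQ_zero)
    then have "(\<lambda>n. norm (of_nat (ycoef n) :: complex)) \<longlonglongrightarrow> norm (0::complex)" by (rule tendsto_norm)
    then have "(\<lambda>n. real (ycoef n)) \<longlonglongrightarrow> 0" by simp
    then have "eventually (\<lambda>n. real (ycoef n) < 1) sequentially"
      by (rule order_tendstoD) simp
    then obtain n0 where "\<And>n. n \<ge> n0 \<Longrightarrow> real (ycoef n) < 1"
      by (auto simp: eventually_sequentially)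
    then have "real (ycoef (Suc n0)) < 1" by simp
    moreover have "1 \<le> ycoef (Suc n0)" by (rule ycoef_pos) simp
    ultimately show False by simp
  qed
  then have "CR \<le> norm (1::complex)" unfolding CR_def by (rule conv_radius_leI')
  then show ?thesis by (simp add: one_ereal_def)
qed



lemma sum_TN_real: "(\<Sum>s\<in>TN N. (t::real) ^ nverts s) = PNr N t"
proof -
  have "(\<Sum>s\<in>TN N. t ^ nverts s) = (\<Sum>k\<in>{..N}. \<Sum>s\<in>{s\<in>TN N. nverts s = k}. t ^ nverts s)"
    by (rule sum.group[symmetric]) (use finite_TN[of N] in \<open>auto simp: TN_def\<close>)
  also have "\<dots> = (\<Sum>k\<le>N. real (ycoef k) * t ^ k)"
  proof (rule sum.cong)
    fix k assume "k \<in> {..N}"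
    then have "{s\<in>TN N. nverts s = k} = {s. nverts s = k}" by (auto simp: TN_def)
    then show "(\<Sum>s\<in>{s\<in>TN N. nverts s = k}. t ^ nverts s) = real (ycoef k) * t ^ k"
      by (simp add: ycoef_def)
  qed simp
  finally show ?thesis by (simp add: PNr_def)
qed

lemma PNr_nonneg: "0 \<le> r \<Longrightarrow> 0 \<le> PNr N r"
  by (simp add: PNr_def sum_nonneg)

lemma norm_PN: assumes "norm z \<le> r" shows "norm (PN N z) \<le> PNr N r"
proof -
  have "norm (PN N z) \<le> (\<Sum>k\<le>N. norm (of_nat (ycoef k) * z ^ k))"
    unfolding PN_def by (rule norm_sum)
  also have "\<dots> \<le> PNr N r"
    unfolding PNr_def
    by (rule sum_mono) (use assms in \<open>auto simp: norm_mult norm_power intro!: mult_left_mono power_mono\<close>)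
  finally show ?thesis .
qed

lemma PNr_pow: assumes "0 \<le> r" "r \<le> 1" shows "PNr N (r ^ (n + 1)) \<le> r ^ n * PNr N r"
  using POWfin[of r "n+1" "\<lambda>k. real (ycoef k)" N] assms by (simp add: PNr_def ycoef_0)

lemma LN_bound:
  fixes x :: complex assumes "norm x \<le> r" "r < 1"
  shows "norm (LN N x) \<le> PNr N r / (1 - r)"
proof -
  have r0: "0 \<le> r" using assms(1) norm_ge_zero order_trans by blast
  define f where "f n = PN N (x ^ (n + 1)) / of_nat (n + 1)" for n
  define g where "g n = r ^ n * PNr N r" for n
  have b: "norm (f n) \<le> g n" for n
  proof -
    have a0: "0 \<le> norm (PN N (x ^ (n + 1)))" by simp
    have "norm (PN N (x ^ (n + 1))) * 1 \<le> norm (PN N (x ^ (n + 1))) * (real n + 1)"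
      using a0 by (rule mult_left_mono[rotated]) simp
    then have "norm (f n) \<le> norm (PN N (x ^ (n + 1)))"
      unfolding f_def norm_divide norm_of_nat by (simp add: divide_le_eq add.commute)
    also have "\<dots> \<le> PNr N (r ^ (n + 1))"
    proof (rule norm_PN)
      show "norm (x ^ (n + 1)) \<le> r ^ (n + 1)" unfolding norm_power by (rule power_mono) (use assms in auto)
    qed
    also have "\<dots> \<le> g n" unfolding g_def by (rule PNr_pow) (use r0 assms in auto)
    finally show ?thesis .
  qed
  have gs0: "(\<lambda>n. r ^ n * PNr N r) sums (1 / (1 - r) * PNr N r)"
    by (rule sums_mult2[OF geometric_sums]) (use r0 assms in simp)
  have e: "1 / (1 - r) * PNr N r = PNr N r / (1 - r)" by simp
  have gs: "g sums (PNr N r / (1 - r))"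
    using gs0 unfolding g_def e .
  have ns: "summable (\<lambda>n. norm (f n))"
    by (rule summable_comparison_test[OF _ sums_summable[OF gs]]) (use b in auto)
  have "norm (LN N x) \<le> (\<Sum>n. norm (f n))" unfolding LN_def f_def[symmetric] by (rule summable_norm[OF ns])
  also have "\<dots> \<le> (\<Sum>n. g n)" by (rule suminf_le[OF b ns sums_summable[OF gs]])
  also have "\<dots> = PNr N r / (1 - r)" using gs by (simp add: sums_iff)
  finally show ?thesis .
qed

lemma TN_sub_CN: "TN (Suc N) \<subseteq> CN N"
proof
  fix t assume "t \<in> TN (Suc N)"
  obtain M where t: "t = Node M" by (cases t)
  with \<open>t \<in> TN (Suc N)\<close> have "msz M \<le> N" by (simp add: TN_def msz_def)
  then have "set_mset M \<subseteq> TN N" using msz_ge_elem by (force simp: TN_def)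
  then show "t \<in> CN N" using t by (auto simp: CN_def)
qed

lemma stepA:
  fixes t :: real assumes "0 \<le> t" "t < 1"
  shows "PNr (Suc N) t \<le> t * exp (PNr N t / (1 - t))"
proof -
  define x where "x = complex_of_real t"
  have nx: "norm x = t" using assms by (simp add: x_def)
  have H: "((\<lambda>s. x ^ nverts s) has_sum (x * exp (LN N x))) (CN N)" by (rule FIN) (use nx assms in simp)
  have HR: "((\<lambda>s. t ^ nverts s) has_sum Re (x * exp (LN N x))) (CN N)"
    using has_sum_Re[OF H] by (simp add: x_def flip: of_real_power)
  have "PNr (Suc N) t = (\<Sum>s\<in>TN (Suc N). t ^ nverts s)" by (simp add: sum_TN_real)
  also have "\<dots> \<le> Re (x * exp (LN N x))"
    by (rule finite_sum_le_has_sum[OF HR]) (use TN_sub_CN finite_TN assms in auto)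
  also have "\<dots> \<le> norm (x * exp (LN N x))" by (rule complex_Re_le_cmod)
  also have "\<dots> \<le> t * exp (norm (LN N x))"
  proof -
    have e1: "norm (x * exp (LN N x)) = t * exp (Re (LN N x))" by (simp add: norm_mult nx)
    have "exp (Re (LN N x)) \<le> exp (norm (LN N x))" using complex_Re_le_cmod[of "LN N x"] by simp
    then have "t * exp (Re (LN N x)) \<le> t * exp (norm (LN N x))" using assms(1) by (rule mult_left_mono)
    then show ?thesis unfolding e1 .
  qed
  also have "\<dots> \<le> t * exp (PNr N t / (1 - t))"
    using LN_bound[of x t N] nx assms by (simp add: mult_left_mono)
  finally show ?thesis .
qed

lemma PNr_small: "PNr N (1/16) \<le> 1"
proof (induction N)
  case 0 then show ?case by (simp add: PNr_def ycoef_0)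
next
  case (Suc N)
  have "PNr (Suc N) (1/16) \<le> 1/16 * exp (PNr N (1/16) / (1 - 1/16))" by (rule stepA) auto
  also have "\<dots> \<le> 1/16 * exp 2"
  proof -
    have "PNr N (1/16) / (1 - 1/16) \<le> 2" using Suc by (simp add: divide_le_eq)
    then have "exp (PNr N (1/16) / (1 - 1/16)) \<le> exp 2" by (simp only: exp_le_cancel_iff)
    then show ?thesis by (rule mult_left_mono) simp
  qed
  also have "exp (2::real) = exp 1 * exp 1" by (metis exp_add one_add_one)
  also have "exp 1 * exp 1 \<le> (3::real) * 3" using exp_le by (intro mult_mono) auto
  finally show ?case by linarith
qed

lemma summable_16: "summable (\<lambda>n. real (ycoef n) * (1/16) ^ n)"
proof (rule summableI_nonneg_bounded)
  fix n
  have "(\<Sum>i<n. real (ycoef i) * (1/16) ^ i) \<le> PNr n (1/16)"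
    unfolding PNr_def by (rule sum_mono2) auto
  then show "(\<Sum>i<n. real (ycoef i) * (1/16) ^ i) \<le> 1" using PNr_small[of n] by linarith
qed simp

lemma CR_ge: "ereal (1/16) \<le> CR"
proof -
  have "summable (\<lambda>n. (of_nat (ycoef n) :: complex) * (complex_of_real (1/16)) ^ n)"
    using summable_16 summable_complex_of_real[of "\<lambda>n. real (ycoef n) * (1/16) ^ n"]
    by (simp add: of_real_power)
  then have "norm (complex_of_real (1/16)) \<le> CR" unfolding CR_def by (rule conv_radius_geI)
  then show ?thesis by simp
qed



lemma split_tail:
  fixes f :: "nat \<Rightarrow> 'a::real_normed_vector"
  assumes "summable f"
  shows "summable (\<lambda>k. if N < k then f k else 0)"
    and "(\<Sum>k. f k) = (\<Sum>k\<le>N. f k) + (\<Sum>k. if N < k then f k else 0)"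
proof -
  define h where "h k = (if k \<le> N then f k else 0)" for k
  have hs: "summable h" by (rule summable_finite[of "{..N}"]) (auto simp: h_def)
  have hv: "suminf h = (\<Sum>k\<le>N. f k)" by (subst suminf_finite[of "{..N}"]) (auto simp: h_def)
  have e: "(\<lambda>k. if N < k then f k else 0) = (\<lambda>k. f k - h k)" by (auto simp: h_def)
  show s: "summable (\<lambda>k. if N < k then f k else 0)" unfolding e by (rule summable_diff[OF assms hs])
  have "(\<Sum>k. if N < k then f k else 0) = suminf f - suminf h" unfolding e by (rule suminf_diff[OF assms hs, symmetric])
  then show "(\<Sum>k. f k) = (\<Sum>k\<le>N. f k) + (\<Sum>k. if N < k then f k else 0)" using hv by simp
qed

lemma normsum: "ereal (norm z) < CR \<Longrightarrow> summable (\<lambda>n. norm ((of_nat (ycoef n) :: complex) * z ^ n))"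
  unfolding CR_def by (rule abs_summable_in_conv_radius)

lemma sumY: assumes "0 \<le> r" "ereal r < CR" shows "summable (\<lambda>n. real (ycoef n) * r ^ n)"
proof -
  have "summable (\<lambda>n. norm ((of_nat (ycoef n) :: complex) * complex_of_real r ^ n))"
    by (rule normsum) (use assms in simp)
  moreover have "norm ((of_nat (ycoef n) :: complex) * complex_of_real r ^ n) = real (ycoef n) * r ^ n" for n
    using assms(1) by (simp add: norm_mult norm_power)
  ultimately show ?thesis by simp
qed

lemma Yr_nonneg: "0 \<le> r \<Longrightarrow> ereal r < CR \<Longrightarrow> 0 \<le> Yr r"
  unfolding Yr_def by (rule suminf_nonneg) (simp_all add: sumY)

lemma CR_norm_lt1: assumes "ereal (norm z) < CR" shows "norm z < 1"
proof -
  have "ereal (norm z) < 1" using assms CR_le_1 by (rule less_le_trans)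
  then show ?thesis by (simp add: one_ereal_def)
qed

lemma ygf_norm: assumes "ereal (norm z) < CR" shows "norm (ygf z) \<le> Yr (norm z)"
proof -
  have "norm (ygf z) \<le> (\<Sum>n. norm ((of_nat (ycoef n) :: complex) * z ^ n))"
    unfolding ygf_def by (rule summable_norm[OF normsum[OF assms]])
  also have "\<dots> = Yr (norm z)" by (simp add: Yr_def norm_mult norm_power)
  finally show ?thesis .
qed

lemma ygf_real: assumes "0 \<le> t" "ereal t < CR" shows "ygf (of_real t) = of_real (Yr t)"
proof -
  have "(\<lambda>n. real (ycoef n) * t ^ n) sums Yr t" unfolding Yr_def by (rule summable_sums[OF sumY[OF assms]])
  then have "(\<lambda>n. complex_of_real (real (ycoef n) * t ^ n)) sums complex_of_real (Yr t)"
    by (subst sums_of_real_iff)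
  then have "(\<lambda>n. (of_nat (ycoef n) :: complex) * complex_of_real t ^ n) sums complex_of_real (Yr t)"
    by (simp add: of_real_power)
  then show ?thesis unfolding ygf_def by (rule sums_unique[symmetric])
qed

lemma CR_mono: assumes "ereal (norm z) < CR" "norm w \<le> norm z" shows "ereal (norm w) < CR"
proof -
  have "ereal (norm w) \<le> ereal (norm z)" using assms(2) by simp
  then show ?thesis using assms(1) by (rule le_less_trans)
qed

lemma ygf_has_sum: assumes "ereal (norm x) < CR" shows "((\<lambda>t. x ^ nverts t) has_sum ygf x) UNIV"
  unfolding ygf_def
  by (rule G[of "\<lambda>n. x ^ n"]) (use normsum[OF assms] in \<open>simp add: norm_mult\<close>)

lemma notCN: assumes "t \<notin> CN N" shows "Suc N < nverts t"
proof -
  obtain M where t: "t = Node M" by (cases t)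
  with assms have "\<not> set_mset M \<subseteq> TN N" by (auto simp: CN_def)
  then obtain s where s0: "s \<in># M" "s \<notin> TN N" by auto
  then have s: "s \<in># M" "N < nverts s" by (auto simp: TN_def)
  then have "N < msz M" using msz_ge_elem[OF s(1)] by linarith
  then show ?thesis by (simp add: t msz_def)
qed

definition acoef :: "nat \<Rightarrow> nat \<Rightarrow> real" where "acoef N k = (if N < k then real (ycoef k) else 0)"

definition TL :: "nat \<Rightarrow> real \<Rightarrow> real" where "TL N s = (\<Sum>k. acoef N k * s ^ k)"

lemma TL_alt: assumes "0 \<le> r" "ereal r < CR" shows "summable (\<lambda>k. acoef N k * r ^ k)" "TL N r = Yr r - PNr N r"
proof -
  have e: "(\<lambda>k. acoef N k * r ^ k) = (\<lambda>k. if N < k then real (ycoef k) * r ^ k else 0)"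
    by (auto simp: acoef_def)
  show "summable (\<lambda>k. acoef N k * r ^ k)" unfolding e by (rule split_tail(1)[OF sumY[OF assms]])
  show "TL N r = Yr r - PNr N r" unfolding TL_def e Yr_def PNr_def using split_tail(2)[OF sumY[OF assms], of N] by simp
qed

lemma TL_lim: assumes "0 \<le> r" "ereal r < CR" shows "(\<lambda>N. TL N r) \<longlonglongrightarrow> 0"
proof -
  have "(\<lambda>N. PNr N r) \<longlonglongrightarrow> Yr r" unfolding PNr_def Yr_def by (rule summable_LIMSEQ'[OF sumY[OF assms]])
  then have "(\<lambda>N. Yr r - PNr N r) \<longlonglongrightarrow> Yr r - Yr r" by (intro tendsto_intros)
  then show ?thesis using TL_alt(2)[OF assms] by simp
qed

lemma TL_pow: assumes "0 \<le> r" "r \<le> 1" "ereal r < CR"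
  shows "TL N (r ^ (n + 1)) \<le> r ^ n * TL N r"
  using POW(2)[of r "n+1" "acoef N", OF assms(1,2) _ _ _ TL_alt(1)[OF assms(1,3)]]
  by (simp add: TL_def acoef_def)

lemma diff_PN: assumes "ereal (norm z) < CR"
  shows "norm (ygf z - PN N z) \<le> TL N (norm z)"
proof -
  define f where "f k = (of_nat (ycoef k) :: complex) * z ^ k" for k
  have fs: "summable f" unfolding f_def by (rule summable_norm_cancel[OF normsum[OF assms]])
  have "ygf z - PN N z = (\<Sum>k. if N < k then f k else 0)"
    using split_tail(2)[OF fs, of N] by (simp add: ygf_def PN_def f_def)
  also have "norm \<dots> \<le> (\<Sum>k. norm (if N < k then f k else 0))"
  proof (rule summable_norm)
    have "summable (\<lambda>k. if N < k then norm (f k) else 0)"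
      by (rule split_tail(1)) (use normsum[OF assms] in \<open>simp add: f_def\<close>)
    moreover have "(\<lambda>k. norm (if N < k then f k else 0)) = (\<lambda>k. if N < k then norm (f k) else 0)" by auto
    ultimately show "summable (\<lambda>k. norm (if N < k then f k else 0))" by simp
  qed
  also have "\<dots> = TL N (norm z)"
    unfolding TL_def by (rule suminf_cong) (simp add: acoef_def f_def norm_mult norm_power)
  finally show ?thesis .
qed



lemma div_le: "norm ((w::complex) / of_nat (n + 1)) \<le> norm w"
proof -
  have a0: "0 \<le> norm w" by simp
  have "norm w * 1 \<le> norm w * (real n + 1)" using a0 by (rule mult_left_mono[rotated]) simp
  then show ?thesis unfolding norm_divide norm_of_nat by (simp add: divide_le_eq add.commute)
qed

lemma Yr_pow: assumes "0 \<le> r" "r \<le> 1" "ereal r < CR" shows "Yr (r ^ (n + 1)) \<le> r ^ n * Yr r"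
  using POW(2)[of r "n+1" "\<lambda>k. real (ycoef k)", OF assms(1,2) _ _ _ sumY[OF assms(1,3)]]
  by (simp add: Yr_def ycoef_0)

lemma norm_xpow: "norm ((x::complex) ^ (n + 1)) \<le> norm x" if "norm x \<le> 1"
proof -
  have "norm x ^ (n + 1) \<le> norm x ^ 1" by (rule power_decreasing) (use that in auto)
  then show ?thesis by (simp add: norm_power norm_mult)
qed

lemma FE_series:
  fixes x :: complex assumes xa: "ereal (norm x) < CR"
  shows "\<And>n. norm (ygf (x ^ (n + 1)) / of_nat (n + 1)) \<le> norm x ^ n * Yr (norm x)"
    and "summable (\<lambda>n. ygf (x ^ (n + 1)) / of_nat (n + 1))"
proof -
  define r where "r = norm x"
  have r0: "0 \<le> r" and r1: "r < 1" using CR_norm_lt1[OF xa] by (auto simp: r_def)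
  have rc: "ereal r < CR" using xa by (simp add: r_def)
  show b: "norm (ygf (x ^ (n + 1)) / of_nat (n + 1)) \<le> norm x ^ n * Yr (norm x)" for n
  proof -
    have c: "ereal (norm (x ^ (n + 1))) < CR" by (rule CR_mono[OF xa norm_xpow]) (use r1 in \<open>simp add: r_def\<close>)
    have "norm (ygf (x ^ (n + 1)) / of_nat (n + 1)) \<le> norm (ygf (x ^ (n + 1)))" by (rule div_le)
    also have "\<dots> \<le> Yr (norm (x ^ (n + 1)))" by (rule ygf_norm[OF c])
    also have "\<dots> \<le> r ^ n * Yr r" unfolding norm_power r_def[symmetric] by (rule Yr_pow) (use r0 r1 rc in auto)
    finally show ?thesis by (simp add: r_def)
  qed
  have "summable (\<lambda>n. norm x ^ n * Yr (norm x))"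
    by (rule summable_mult2) (use r1 r0 in \<open>simp add: r_def summable_geometric\<close>)
  then show "summable (\<lambda>n. ygf (x ^ (n + 1)) / of_nat (n + 1))"
    by (rule summable_comparison_test[rotated]) (use b in auto)
qed

theorem FE:
  fixes x :: complex assumes xa: "ereal (norm x) < CR"
  shows "ygf x = x * exp (\<Sum>n. ygf (x ^ (n + 1)) / of_nat (n + 1))"
proof -
  define r where "r = norm x"
  have r0: "0 \<le> r" and r1: "r < 1" using CR_norm_lt1[OF xa] by (auto simp: r_def)
  have rc: "ereal r < CR" using xa by (simp add: r_def)
  define u where "u n = ygf (x ^ (n + 1)) / of_nat (n + 1)" for n
  define L where "L = (\<Sum>n. u n)"
  have us: "summable u" unfolding u_def by (rule FE_series(2)[OF xa])
  have cpow: "ereal (norm (x ^ (n + 1))) < CR" for n by (rule CR_mono[OF xa norm_xpow]) (use r1 in \<open>simp add: r_def\<close>)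
  have E2: "norm (L - LN N x) \<le> TL N r / (1 - r)" for N
  proof -
    define v where "v n = PN N (x ^ (n + 1)) / of_nat (n + 1)" for n
    define g where "g n = r ^ n * PNr N r" for n
    define h where "h n = r ^ n * TL N r" for n
    have vb: "norm (v n) \<le> g n" for n
    proof -
      have "norm (v n) \<le> norm (PN N (x ^ (n + 1)))" unfolding v_def by (rule div_le)
      also have "\<dots> \<le> PNr N (r ^ (n + 1))"
        by (rule norm_PN) (use norm_power[of x "n+1"] in \<open>simp add: r_def\<close>)
      also have "\<dots> \<le> g n" unfolding g_def by (rule PNr_pow) (use r0 r1 in auto)
      finally show ?thesis .
    qed
    have gs: "summable g" unfolding g_def by (rule summable_mult2) (use r1 r0 in \<open>simp add: summable_geometric\<close>)
    have vs: "summable v" by (rule summable_comparison_test[rotated, OF gs]) (use vb in auto)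
    have hb: "norm (u n - v n) \<le> h n" for n
    proof -
      have "u n - v n = (ygf (x ^ (n + 1)) - PN N (x ^ (n + 1))) / of_nat (n + 1)"
        by (simp add: u_def v_def diff_divide_distrib)
      then have "norm (u n - v n) \<le> norm (ygf (x ^ (n + 1)) - PN N (x ^ (n + 1)))" using div_le by simp
      also have "\<dots> \<le> TL N (norm (x ^ (n + 1)))" by (rule diff_PN[OF cpow])
      also have "\<dots> \<le> h n" unfolding h_def norm_power r_def[symmetric] by (rule TL_pow) (use r0 r1 rc in auto)
      finally show ?thesis .
    qed
    have hsum: "h sums (TL N r / (1 - r))"
    proof -
      have "(\<lambda>n. r ^ n * TL N r) sums (1 / (1 - r) * TL N r)"
        by (rule sums_mult2[OF geometric_sums]) (use r0 r1 in simp)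
      moreover have "1 / (1 - r) * TL N r = TL N r / (1 - r)" by simp
      ultimately show ?thesis unfolding h_def by simp
    qed
    have ns: "summable (\<lambda>n. norm (u n - v n))"
      by (rule summable_comparison_test[OF _ sums_summable[OF hsum]]) (use hb in auto)
    have "L - LN N x = (\<Sum>n. u n - v n)" unfolding L_def LN_def v_def[symmetric] by (rule suminf_diff[OF us vs])
    also have "norm \<dots> \<le> (\<Sum>n. norm (u n - v n))" by (rule summable_norm[OF ns])
    also have "\<dots> \<le> (\<Sum>n. h n)" by (rule suminf_le[OF hb ns sums_summable[OF hsum]])
    also have "\<dots> = TL N r / (1 - r)" using hsum by (simp add: sums_iff)
    finally show ?thesis .
  qed
  have E1: "norm (ygf x - x * exp (LN N x)) \<le> TL (Suc N) r" for N
  proof -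
    have A: "((\<lambda>t. x ^ nverts t) has_sum ygf x) UNIV" by (rule ygf_has_sum[OF xa])
    have B: "((\<lambda>t. x ^ nverts t) has_sum (x * exp (LN N x))) (CN N)" by (rule FIN) (use r1 in \<open>simp add: r_def\<close>)
    have B': "((\<lambda>t. if t \<in> CN N then x ^ nverts t else 0) has_sum (x * exp (LN N x))) UNIV"
      using B by (subst has_sum_cong_neutral[where T="CN N"]) auto
    have D: "((\<lambda>t. x ^ nverts t + - (if t \<in> CN N then x ^ nverts t else 0)) has_sum (ygf x + - (x * exp (LN N x)))) UNIV"
      by (rule has_sum_add[OF A has_sum_uminusI[OF B']])
    define hh where "hh n = (if Suc N < n then r ^ n else 0)" for n
    have hhs: "summable (\<lambda>n. real (ycoef n) * norm (hh n))"
    proof (rule summable_comparison_test[OF _ sumY[OF r0 rc]])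
      show "\<exists>N0. \<forall>n\<ge>N0. norm (real (ycoef n) * norm (hh n)) \<le> real (ycoef n) * r ^ n"
        using r0 by (auto simp: hh_def)
    qed
    have Eh: "((\<lambda>t. hh (nverts t)) has_sum (\<Sum>n. of_nat (ycoef n) * hh n)) UNIV" by (rule G[OF hhs])
    have "(\<Sum>n. of_nat (ycoef n) * hh n) = TL (Suc N) r"
      unfolding TL_def by (rule suminf_cong) (simp add: hh_def acoef_def)
    with Eh have E: "((\<lambda>t. hh (nverts t)) has_sum TL (Suc N) r) UNIV" by simp
    have "norm (ygf x + - (x * exp (LN N x))) \<le> TL (Suc N) r"
    proof (rule norm_infsum_le[OF D E])
      fix t :: rtree
      show "norm (x ^ nverts t + - (if t \<in> CN N then x ^ nverts t else 0)) \<le> hh (nverts t)"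
        using notCN[of t N] r0 by (auto simp: hh_def norm_power r_def)
    qed
    then show ?thesis by simp
  qed
  have T0: "(\<lambda>N. TL N r) \<longlonglongrightarrow> 0" by (rule TL_lim[OF r0 rc])
  have lim1: "(\<lambda>N. x * exp (LN N x)) \<longlonglongrightarrow> ygf x"
  proof -
    have "(\<lambda>N. ygf x - x * exp (LN N x)) \<longlonglongrightarrow> 0"
      by (rule Lim_null_comparison[OF _ LIMSEQ_Suc[OF T0]]) (use E1 in auto)
    then have "(\<lambda>N. ygf x - (ygf x - x * exp (LN N x))) \<longlonglongrightarrow> ygf x - 0" by (intro tendsto_intros)
    then show ?thesis by simp
  qed
  have lim2: "(\<lambda>N. x * exp (LN N x)) \<longlonglongrightarrow> x * exp L"
  proof -
    have "(\<lambda>N. TL N r / (1 - r)) \<longlonglongrightarrow> 0 / (1 - r)" by (intro tendsto_intros T0) (use r1 in simp)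
    then have tl0: "(\<lambda>N. TL N r / (1 - r)) \<longlonglongrightarrow> 0" by simp
    have "(\<lambda>N. L - LN N x) \<longlonglongrightarrow> 0"
      by (rule Lim_null_comparison[OF _ tl0]) (use E2 in auto)
    then have "(\<lambda>N. L - (L - LN N x)) \<longlonglongrightarrow> L - 0" by (intro tendsto_intros)
    then have "(\<lambda>N. LN N x) \<longlonglongrightarrow> L" by simp
    then show ?thesis by (intro tendsto_intros)
  qed
  from LIMSEQ_unique[OF lim1 lim2] show ?thesis unfolding L_def u_def .
qed



lemma CRp: assumes "0 \<le> t" "t \<le> 1" "ereal t < CR" "1 \<le> m" shows "ereal (t ^ m) < CR"
proof -
  have "t ^ m \<le> t ^ 1" by (rule power_decreasing) (use assms in auto)
  then have "ereal (t ^ m) \<le> ereal t" by simp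
  then show ?thesis using assms(3) by (rule le_less_trans)
qed

lemma FE_real:
  assumes t0: "0 \<le> t" and tc: "ereal t < CR"
  shows "summable (\<lambda>n. Yr (t ^ (n + 1)) / real (n + 1))"
    and "Yr t = t * exp (\<Sum>n. Yr (t ^ (n + 1)) / real (n + 1))"
proof -
  define x where "x = complex_of_real t"
  have xa: "ereal (norm x) < CR" using t0 tc by (simp add: x_def)
  have t1: "t < 1" using CR_norm_lt1[OF xa] t0 by (simp add: x_def)
  have e: "ygf (x ^ (n + 1)) / of_nat (n + 1) = complex_of_real (Yr (t ^ (n + 1)) / real (n + 1))" for n
  proof -
    have c0: "ereal (norm (x ^ (n + 1))) < CR" by (rule CR_mono[OF xa norm_xpow]) (use t0 t1 in \<open>simp add: x_def\<close>)
    have "norm (x ^ (n + 1)) = t ^ (n + 1)" using t0 by (simp add: x_def norm_power norm_mult)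
    then have c: "ereal (t ^ (n + 1)) < CR" using c0 by simp
    have "ygf (x ^ (n + 1)) = complex_of_real (Yr (t ^ (n + 1)))"
      unfolding x_def of_real_power[symmetric] by (rule ygf_real) (use t0 c in auto)
    then show ?thesis by simp
  qed
  have cs: "summable (\<lambda>n. ygf (x ^ (n + 1)) / of_nat (n + 1))" by (rule FE_series(2)[OF xa])
  then show rs: "summable (\<lambda>n. Yr (t ^ (n + 1)) / real (n + 1))" unfolding e by (simp only: summable_complex_of_real)
  have "(\<lambda>n. complex_of_real (Yr (t ^ (n + 1)) / real (n + 1))) sums complex_of_real (\<Sum>n. Yr (t ^ (n + 1)) / real (n + 1))"
    by (subst sums_of_real_iff) (rule summable_sums[OF rs])
  then have s: "(\<Sum>n. ygf (x ^ (n + 1)) / of_nat (n + 1)) = complex_of_real (\<Sum>n. Yr (t ^ (n + 1)) / real (n + 1))"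
    unfolding e by (rule sums_unique[symmetric])
  have "complex_of_real (Yr t) = ygf x" by (rule ygf_real[symmetric, OF t0 tc, folded x_def])
  also have "\<dots> = x * exp (\<Sum>n. ygf (x ^ (n + 1)) / of_nat (n + 1))" by (rule FE[OF xa])
  also have "\<dots> = x * exp (complex_of_real (\<Sum>n. Yr (t ^ (n + 1)) / real (n + 1)))"
    by (simp only: s)
  also have "\<dots> = complex_of_real (t * exp (\<Sum>n. Yr (t ^ (n + 1)) / real (n + 1)))"
    by (simp only: x_def exp_of_real of_real_mult)
  finally show "Yr t = t * exp (\<Sum>n. Yr (t ^ (n + 1)) / real (n + 1))" by (simp only: of_real_eq_iff)
qed

lemma Yr_mono: assumes "0 \<le> a" "a \<le> b" "ereal b < CR" shows "Yr a \<le> Yr b"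
proof -
  have ac: "ereal a < CR" using assms by (meson ereal_less_eq(3) le_less_trans)
  show ?thesis unfolding Yr_def
    by (rule suminf_le) (use assms sumY[OF assms(1) ac] sumY[of b] in \<open>auto intro!: mult_left_mono power_mono\<close>)
qed

lemma Yr_ge: assumes "0 \<le> t" "ereal t < CR" shows "t \<le> Yr t"
proof -
  have "(\<Sum>n\<in>{0,1}. real (ycoef n) * t ^ n) \<le> Yr t"
    unfolding Yr_def by (rule sum_le_suminf) (use sumY[OF assms] assms in auto)
  moreover have "t \<le> (\<Sum>n\<in>{0,1}. real (ycoef n) * t ^ n)"
    using ycoef_1 assms(1) by (simp add: ycoef_0 mult_le_cancel_right1)
  ultimately show ?thesis by linarith
qed

definition S2 :: "real \<Rightarrow> real" where "S2 t = (\<Sum>n. Yr (t ^ (n + 2)) / real (n + 2))"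

lemma FE_split: assumes "0 \<le> t" "ereal t < CR"
  shows "Yr t = t * exp (Yr t) * exp (S2 t)" "0 \<le> S2 t"
proof -
  note rs = FE_real(1)[OF assms]
  have "(\<Sum>n. Yr (t ^ (Suc n + 1)) / real (Suc n + 1)) = (\<Sum>n. Yr (t ^ (n + 1)) / real (n + 1)) - Yr t"
    using suminf_split_head[OF rs] by simp
  then have eq: "(\<Sum>n. Yr (t ^ (n + 1)) / real (n + 1)) = Yr t + S2 t" by (simp add: S2_def)
  have FR: "Yr t = t * exp (\<Sum>n. Yr (t ^ (n + 1)) / real (n + 1))" by (rule FE_real(2)[OF assms])
  from FR[unfolded eq exp_add] show "Yr t = t * exp (Yr t) * exp (S2 t)" by (simp only: mult.assoc)
  have t1: "t < 1" using CR_norm_lt1[of "complex_of_real t"] assms by simp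
  have "summable (\<lambda>n. Yr (t ^ (Suc n + 1)) / real (Suc n + 1))" using rs by (subst summable_Suc_iff)
  then have "summable (\<lambda>n. Yr (t ^ (n + 2)) / real (n + 2))" by simp
  moreover have "0 \<le> Yr (t ^ (n + 2)) / real (n + 2)" for n
    using Yr_nonneg[of "t ^ (n + 2)"] CRp[of t "n + 2"] assms t1 by simp
  ultimately show "0 \<le> S2 t" unfolding S2_def by (rule suminf_nonneg)
qed



lemma CR_eq: "CR = ereal rho"
proof -
  have r: "rho = real_of_ereal CR" by (simp add: rho_def CR_def)
  have n1: "CR \<noteq> - \<infinity>"
  proof
    assume "CR = - \<infinity>"
    moreover have "0 \<le> CR" unfolding CR_def by (rule conv_radius_nonneg)
    ultimately show False by simp
  qed
  have n2: "CR \<noteq> \<infinity>" using CR_le_1 by auto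
  obtain c where c: "CR = ereal c" using n1 n2 by (cases CR) auto
  have rc: "rho = c" by (simp only: r c real_of_ereal.simps(1))
  show ?thesis by (simp only: c rc)
qed

lemma rho_ge: "1/16 \<le> rho" using CR_ge by (simp add: CR_eq)

lemma lt_CR: "t < rho \<Longrightarrow> ereal t < CR" by (simp add: CR_eq)

lemma t_e: assumes "0 < t" "ereal t < CR" shows "t * exp 1 \<le> 1"
proof -
  define Y where "Y = Yr t"
  have Ypos: "0 < Y" using Yr_ge[of t] assms by (simp add: Y_def)
  have FS: "Y = t * exp Y * exp (S2 t)" "0 \<le> S2 t" using FE_split[of t] assms by (auto simp: Y_def)
  have "1 \<le> exp (S2 t)" using FS(2) by simp
  then have "t * exp Y \<le> t * exp Y * exp (S2 t)" using assms(1) by simp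
  then have a: "t * exp Y \<le> Y" using FS(1) by simp
  have "Y \<le> exp (Y - 1)" using exp_ge_add_one_self[of "Y - 1"] by simp
  then have "exp 1 * Y \<le> exp 1 * exp (Y - 1)" by simp
  also have "exp 1 * exp (Y - 1) = exp Y" by (simp add: exp_add[symmetric])
  finally have "t * (exp 1 * Y) \<le> t * exp Y" using assms(1) by simp
  with a have "(t * exp 1) * Y \<le> 1 * Y" by (simp add: mult.assoc)
  then show ?thesis using Ypos by (rule mult_right_le_imp_le)
qed

lemma rho_le: "rho \<le> 2/5"
proof (rule ccontr)
  assume "\<not> rho \<le> 2/5"
  then have "ereal (2/5) < CR" by (simp add: CR_eq)
  then have "2/5 * exp 1 \<le> (1::real)" by (intro t_e) auto
  moreover have "exp 1 > (27/10::real)" using e_approx_32 by (simp add: abs_if split: if_splits)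
  ultimately show False by simp
qed

lemma S2_summable: assumes "0 \<le> t" "ereal t < CR" shows "summable (\<lambda>n. Yr (t ^ (n + 2)) / real (n + 2))"
proof -
  have "summable (\<lambda>n. Yr (t ^ (Suc n + 1)) / real (Suc n + 1))"
    using FE_real(1)[OF assms] by (subst summable_Suc_iff)
  then show ?thesis by simp
qed

lemma S2_mono: assumes "0 \<le> a" "a \<le> b" "b < 1" "ereal b < CR" shows "S2 a \<le> S2 b"
proof -
  have ac: "ereal a < CR" using assms by (meson ereal_less_eq(3) le_less_trans)
  show ?thesis unfolding S2_def
  proof (rule suminf_le[OF _ S2_summable[OF assms(1) ac] S2_summable[OF _ assms(4)]])
    fix n
    have p: "a ^ (n + 2) \<le> b ^ (n + 2)" by (rule power_mono) (use assms in auto)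
    have "Yr (a ^ (n + 2)) \<le> Yr (b ^ (n + 2))"
      by (rule Yr_mono[OF _ p]) (use assms CRp[of b "n+2"] in auto)
    then show "Yr (a ^ (n + 2)) / real (n + 2) \<le> Yr (b ^ (n + 2)) / real (n + 2)"
      by (simp add: divide_right_mono)
  qed (use assms in auto)
qed

lemma g_dec: fixes a b :: real assumes "1 \<le> a" "a \<le> b" shows "b * exp (- b) \<le> a * exp (- a)"
proof -
  have "1 + (b - a) \<le> exp (b - a)" by (rule exp_ge_add_one_self)
  then have "a * (1 + (b - a)) \<le> a * exp (b - a)" using assms by simp
  moreover have "b \<le> a * (1 + (b - a))"
  proof -
    have "1 * (b - a) \<le> a * (b - a)" by (rule mult_right_mono) (use assms in auto)
    then have "b - a \<le> a * (b - a)" by simp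
    moreover have "a * (1 + (b - a)) = a + a * (b - a)" by (simp add: algebra_simps)
    ultimately show ?thesis by linarith
  qed
  ultimately have "b \<le> a * exp (b - a)" by linarith
  then have "b * exp (- b) \<le> a * exp (b - a) * exp (- b)" by simp
  also have "\<dots> = a * exp (- a)" by (simp add: mult.assoc exp_add[symmetric])
  finally show ?thesis .
qed

lemma Yr_lt1: assumes "0 < R" "R < rho" shows "Yr R < 1"
proof (rule ccontr)
  assume "\<not> Yr R < 1"
  then have Y1: "1 \<le> Yr R" by simp
  define t where "t = (R + rho) / 2"
  have Rt: "R < t" "t < rho" using assms by (auto simp: t_def)
  have tc: "ereal t < CR" "ereal R < CR" using Rt assms by (auto simp: CR_eq)
  have t1: "t < 1" using Rt rho_le by simp
  have F1: "Yr R = R * exp (Yr R) * exp (S2 R)" using FE_split(1)[of R] assms tc by simp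
  have F2: "Yr t = t * exp (Yr t) * exp (S2 t)" using FE_split(1)[of t] Rt assms tc by simp
  have g1: "Yr R * exp (- Yr R) = R * exp (S2 R)"
  proof -
    have "Yr R * exp (- Yr R) = R * exp (S2 R) * (exp (Yr R) * exp (- Yr R))" using F1 by (metis mult.commute mult.left_commute)
    then show ?thesis by (simp add: exp_minus)
  qed
  have g2: "Yr t * exp (- Yr t) = t * exp (S2 t)"
  proof -
    have "Yr t * exp (- Yr t) = t * exp (S2 t) * (exp (Yr t) * exp (- Yr t))" using F2 by (metis mult.commute mult.left_commute)
    then show ?thesis by (simp add: exp_minus)
  qed
  have "S2 R \<le> S2 t" by (rule S2_mono) (use assms Rt t1 tc in auto)
  then have "exp (S2 R) \<le> exp (S2 t)" by simp
  then have "R * exp (S2 R) \<le> R * exp (S2 t)" using assms by (intro mult_left_mono) auto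
  also have "R * exp (S2 t) < t * exp (S2 t)" using Rt by (intro mult_strict_right_mono) auto
  finally have "R * exp (S2 R) < t * exp (S2 t)" .
  moreover have "Yr R \<le> Yr t" by (rule Yr_mono) (use assms Rt tc in auto)
  then have "Yr t * exp (- Yr t) \<le> Yr R * exp (- Yr R)" using Y1 by (intro g_dec) auto
  ultimately show False using g1 g2 by simp
qed



lemma exp_diff:
  fixes a b :: complex assumes "norm a \<le> S" "norm b \<le> S"
  shows "norm (exp a - exp b) \<le> exp S * norm (a - b)"
proof (rule field_differentiable_bound[of "cball 0 S" exp exp "exp S"])
  show "convex (cball (0::complex) S)" by (rule convex_cball)
  fix z :: complex assume z: "z \<in> cball 0 S"
  show "(exp has_field_derivative exp z) (at z within cball 0 S)"
    by (rule has_field_derivative_at_within[OF DERIV_exp])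
  have "norm (exp z) \<le> exp (norm z)" by (rule norm_exp)
  also have "\<dots> \<le> exp S" using z by simp
  finally show "norm (exp z) \<le> exp S" .
qed (use assms in auto)

lemma vpow: fixes v :: complex assumes "norm v \<le> 1" shows "norm (v ^ m - 1) \<le> real m * norm (v - 1)"
proof (induction m)
  case 0 then show ?case by simp
next
  case (Suc m)
  have "v ^ Suc m - 1 = v * (v ^ m - 1) + (v - 1)" by (simp add: algebra_simps)
  then have "norm (v ^ Suc m - 1) \<le> norm (v * (v ^ m - 1)) + norm (v - 1)" by (metis norm_triangle_ineq)
  also have "norm (v * (v ^ m - 1)) \<le> norm (v ^ m - 1)"
    using assms by (simp add: norm_mult mult_left_le_one_le)
  finally show ?case using Suc by (simp add: algebra_simps)
qed

lemma Yr_scale: assumes "0 \<le> s" "s \<le> R" "0 < R" "ereal R < CR"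
  shows "Yr s \<le> s * (Yr R / R)"
proof -
  have sc: "ereal s < CR" using assms by (meson ereal_less_eq(3) le_less_trans)
  have b: "real (ycoef n) * s ^ n \<le> (s / R) * (real (ycoef n) * R ^ n)" for n
  proof (cases n)
    case 0 then show ?thesis by (simp add: ycoef_0)
  next
    case (Suc m)
    have "s ^ m \<le> R ^ m" by (rule power_mono) (use assms in auto)
    then have "s * s ^ m \<le> s * R ^ m" using assms(1) by (rule mult_left_mono)
    also have "s * R ^ m = (s / R) * R ^ Suc m" using assms(3) by simp
    finally have "s ^ n \<le> (s / R) * R ^ n" using Suc by simp
    then have "real (ycoef n) * s ^ n \<le> real (ycoef n) * ((s / R) * R ^ n)" by (rule mult_left_mono) simp
    then show ?thesis by (metis mult.left_commute)
  qed
  have "Yr s \<le> (\<Sum>n. (s / R) * (real (ycoef n) * R ^ n))"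
    unfolding Yr_def by (rule suminf_le[OF b sumY[OF assms(1) sc] summable_mult[OF sumY]]) (use assms in auto)
  also have "\<dots> = (s / R) * Yr R" unfolding Yr_def by (rule suminf_mult[OF sumY]) (use assms in auto)
  finally show ?thesis by simp
qed



lemma nz_CR: "norm (z::complex) \<le> R \<Longrightarrow> R < rho \<Longrightarrow> ereal (norm z) < CR"
  by (simp add: CR_eq)

lemma IND:
  assumes R0: "0 < R" and Rr: "R < rho"
  shows "\<forall>z v. norm z \<le> R \<longrightarrow> norm v \<le> 1 \<longrightarrow>
      norm (yk k z v) \<le> Yr (norm z) \<and>
      norm (wk k z v) \<le> (Yr R / R) * (Yr R / (R * (1 - R))) ^ k * norm (v - 1) * norm z ^ (k + 1)"
proof (induction k)
  have R1: "R < 1" using Rr rho_le by simp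
  have RC: "ereal R < CR" using Rr by (simp add: CR_eq)
  case 0
  show ?case
  proof (intro allI impI)
    fix z v :: complex assume z: "norm z \<le> R" and v: "norm v \<le> 1"
    have zc: "ereal (norm z) < CR" using z Rr by (rule nz_CR)
    have gy: "norm (ygf z) \<le> Yr (norm z)" by (rule ygf_norm[OF zc])
    have "norm (yk 0 z v) = norm v * norm (ygf z)" by (simp add: norm_mult)
    also have "\<dots> \<le> 1 * norm (ygf z)" using v by (intro mult_right_mono) auto
    finally have A: "norm (yk 0 z v) \<le> Yr (norm z)" using gy by simp
    have "wk 0 z v = (v - 1) * ygf z" by (simp add: wk_def algebra_simps)
    then have "norm (wk 0 z v) = norm (v - 1) * norm (ygf z)" by (simp add: norm_mult)
    also have "\<dots> \<le> norm (v - 1) * (norm z * (Yr R / R))"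
      using gy Yr_scale[of "norm z" R] z R0 RC by (intro mult_left_mono) auto
    finally have B: "norm (wk 0 z v) \<le> (Yr R / R) * (Yr R / (R * (1 - R))) ^ 0 * norm (v - 1) * norm z ^ (0 + 1)"
      by (simp add: algebra_simps)
    show "norm (yk 0 z v) \<le> Yr (norm z) \<and>
      norm (wk 0 z v) \<le> (Yr R / R) * (Yr R / (R * (1 - R))) ^ 0 * norm (v - 1) * norm z ^ (0 + 1)"
      using A B by blast
  qed
next
  have R1: "R < 1" using Rr rho_le by simp
  have RC: "ereal R < CR" using Rr by (simp add: CR_eq)
  have YR0: "0 \<le> Yr R" using Yr_nonneg[OF _ RC] R0 by simp
  case (Suc k)
  define K0 where "K0 = Yr R / R"
  define M where "M = Yr R / (R * (1 - R))"
  have K00: "0 \<le> K0" using YR0 R0 by (simp add: K0_def)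
  have M0: "0 \<le> M" using YR0 R0 R1 by (simp add: M_def)
  have IH: "\<And>z v. norm z \<le> R \<Longrightarrow> norm v \<le> 1 \<Longrightarrow> norm (yk k z v) \<le> Yr (norm z) \<and>
      norm (wk k z v) \<le> K0 * M ^ k * norm (v - 1) * norm z ^ (k + 1)"
    using Suc.IH unfolding K0_def M_def by blast
  show ?case unfolding K0_def[symmetric] M_def[symmetric]
  proof (intro allI impI)
    fix z v :: complex assume z: "norm z \<le> R" and v: "norm v \<le> 1"
    define r where "r = norm z"
    have r0: "0 \<le> r" and rR: "r \<le> R" and r1: "r < 1" using z R1 by (auto simp: r_def)
    have zc: "ereal (norm z) < CR" using z Rr by (rule nz_CR)
    have rc: "ereal r < CR" using zc by (simp add: r_def)
    have zi: "norm (z ^ (i + 1)) \<le> R" for i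
      using norm_xpow[of z i] z r1 by (simp add: r_def)
    have nzi: "norm (z ^ (i + 1)) = r ^ (i + 1)" for i by (simp only: r_def norm_power)
    have vi: "norm (v ^ (i + 1)) \<le> 1" for i unfolding norm_power by (rule power_le_one) (use v in auto)
    define a where "a i = yk k (z ^ (i + 1)) (v ^ (i + 1)) / of_nat (i + 1)" for i
    define b where "b i = ygf (z ^ (i + 1)) / of_nat (i + 1)" for i
    define q where "q i = Yr (r ^ (i + 1)) / real (i + 1)" for i
    define Sr where "Sr = (\<Sum>i. q i)"
    have qs: "summable q" unfolding q_def by (rule FE_real(1)[OF r0 rc])
    have Yrr: "Yr r = r * exp Sr" unfolding Sr_def q_def by (rule FE_real(2)[OF r0 rc])
    have ndiv: "norm (w / of_nat (i + 1)) = norm w / real (i + 1)" for w :: complex and i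
      by (simp only: norm_divide norm_of_nat)
    have ab: "norm (a i) \<le> q i" for i
    proof -
      have "norm (yk k (z ^ (i + 1)) (v ^ (i + 1))) \<le> Yr (r ^ (i + 1))"
        using IH[OF zi vi] nzi by simp
      then show ?thesis unfolding a_def q_def ndiv by (simp add: divide_right_mono)
    qed
    have bb: "norm (b i) \<le> q i" for i
    proof -
      have "norm (ygf (z ^ (i + 1))) \<le> Yr (r ^ (i + 1))"
        using ygf_norm[OF nz_CR[OF zi Rr]] nzi by simp
      then show ?thesis unfolding b_def q_def ndiv by (simp add: divide_right_mono)
    qed
    have ans: "summable (\<lambda>i. norm (a i))" by (rule summable_comparison_test[OF _ qs]) (use ab in auto)
    have bns: "summable (\<lambda>i. norm (b i))" by (rule summable_comparison_test[OF _ qs]) (use bb in auto)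
    have as: "summable a" by (rule summable_norm_cancel[OF ans])
    have bs: "summable b" by (rule summable_norm_cancel[OF bns])
    define A where "A = suminf a"
    define B where "B = suminf b"
    have nA: "norm A \<le> Sr"
    proof -
      have "norm A \<le> (\<Sum>i. norm (a i))" unfolding A_def by (rule summable_norm[OF ans])
      also have "\<dots> \<le> Sr" unfolding Sr_def by (rule suminf_le[OF ab ans qs])
      finally show ?thesis .
    qed
    have nB: "norm B \<le> Sr"
    proof -
      have "norm B \<le> (\<Sum>i. norm (b i))" unfolding B_def by (rule summable_norm[OF bns])
      also have "\<dots> \<le> Sr" unfolding Sr_def by (rule suminf_le[OF bb bns qs])
      finally show ?thesis .
    qed
    have ykS: "yk (Suc k) z v = z * exp A" by (simp only: A_def a_def[abs_def] yk.simps)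
    have ygfB: "ygf z = z * exp B" unfolding B_def b_def by (rule FE[OF zc])
    have P1: "norm (yk (Suc k) z v) \<le> Yr (norm z)"
    proof -
      have "norm (yk (Suc k) z v) = r * exp (Re A)" unfolding ykS by (simp add: norm_mult r_def)
      also have "\<dots> \<le> r * exp Sr"
        using complex_Re_le_cmod[of A] nA r0 by (intro mult_left_mono) auto
      finally show ?thesis using Yrr by (simp add: r_def)
    qed
    define c where "c = K0 * M ^ k * norm (v - 1)"
    have c0: "0 \<le> c" using K00 M0 by (simp add: c_def)
    define h where "h i = c * r ^ (k + 1) * r ^ i" for i
    have hsum: "h sums (c * r ^ (k + 1) / (1 - r))"
    proof -
      have "(\<lambda>i. r ^ i * (c * r ^ (k + 1))) sums (1 / (1 - r) * (c * r ^ (k + 1)))"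
        by (rule sums_mult2[OF geometric_sums]) (use r0 r1 in simp)
      then show ?thesis unfolding h_def by (simp add: mult.commute)
    qed
    have dh: "norm (a i - b i) \<le> h i" for i
    proof -
      have "a i - b i = wk k (z ^ (i + 1)) (v ^ (i + 1)) / of_nat (i + 1)"
        by (simp add: a_def b_def wk_def diff_divide_distrib)
      then have "norm (a i - b i) = norm (wk k (z ^ (i + 1)) (v ^ (i + 1))) / real (i + 1)"
        by (simp only: ndiv)
      also have "\<dots> \<le> (K0 * M ^ k * (real (i + 1) * norm (v - 1)) * (r ^ (i + 1)) ^ (k + 1)) / real (i + 1)"
      proof (rule divide_right_mono)
        have "norm (wk k (z ^ (i + 1)) (v ^ (i + 1))) \<le> K0 * M ^ k * norm (v ^ (i + 1) - 1) * (r ^ (i + 1)) ^ (k + 1)"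
          using IH[OF zi vi] nzi by simp
        also have "\<dots> \<le> K0 * M ^ k * (real (i + 1) * norm (v - 1)) * (r ^ (i + 1)) ^ (k + 1)"
          using vpow[OF v, of "i + 1"] K00 M0 r0 by (intro mult_right_mono mult_left_mono) auto
        finally show "norm (wk k (z ^ (i + 1)) (v ^ (i + 1))) \<le> K0 * M ^ k * (real (i + 1) * norm (v - 1)) * (r ^ (i + 1)) ^ (k + 1)" .
      qed simp
      also have "\<dots> = c * (r ^ (i + 1)) ^ (k + 1)" by (simp add: c_def)
      also have "\<dots> \<le> c * (r ^ (i + 1 - 1) * r ^ (k + 1))"
        using pow_le[of r "k + 1" "i + 1"] r0 r1 c0 by (intro mult_left_mono) auto
      also have "\<dots> = h i" by (simp add: h_def)
      finally show ?thesis .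
    qed
    have dns: "summable (\<lambda>i. norm (a i - b i))"
      by (rule summable_comparison_test[OF _ sums_summable[OF hsum]]) (use dh in auto)
    have nAB: "norm (A - B) \<le> c * r ^ (k + 1) / (1 - r)"
    proof -
      have "A - B = (\<Sum>i. a i - b i)" unfolding A_def B_def by (rule suminf_diff[OF as bs])
      also have "norm \<dots> \<le> (\<Sum>i. norm (a i - b i))" by (rule summable_norm[OF dns])
      also have "\<dots> \<le> (\<Sum>i. h i)" by (rule suminf_le[OF dh dns sums_summable[OF hsum]])
      also have "\<dots> = c * r ^ (k + 1) / (1 - r)" using hsum by (simp add: sums_iff)
      finally show ?thesis .
    qed
    have "wk (Suc k) z v = z * (exp A - exp B)" unfolding wk_def ykS ygfB by (simp add: algebra_simps)
    then have "norm (wk (Suc k) z v) = r * norm (exp A - exp B)" by (simp add: norm_mult r_def)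
    also have "\<dots> \<le> r * (exp Sr * norm (A - B))"
      using exp_diff[OF nA nB] r0 by (intro mult_left_mono) auto
    also have "\<dots> = Yr r * norm (A - B)" using Yrr by simp
    also have "\<dots> \<le> (r * K0) * (c * r ^ (k + 1) / (1 - R))"
    proof (rule mult_mono)
      show "Yr r \<le> r * K0" using Yr_scale[OF r0 rR R0 RC] by (simp add: K0_def)
      have "c * r ^ (k + 1) / (1 - r) \<le> c * r ^ (k + 1) / (1 - R)"
        using c0 r0 rR R1 by (intro divide_left_mono mult_nonneg_nonneg) auto
      then show "norm (A - B) \<le> c * r ^ (k + 1) / (1 - R)" using nAB by linarith
      show "0 \<le> r * K0" using r0 K00 by simp
      show "0 \<le> norm (A - B)" by simp
    qed
    also have "\<dots> = K0 * M ^ Suc k * norm (v - 1) * norm z ^ (Suc k + 1)"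
      using R0 R1 by (simp add: c_def M_def K0_def r_def field_simps)
    finally show "norm (yk (Suc k) z v) \<le> Yr (norm z) \<and>
      norm (wk (Suc k) z v) \<le> K0 * M ^ Suc k * norm (v - 1) * norm z ^ (Suc k + 1)"
      using P1 by blast
  qed
qed



theorem mainTheorem10:
  shows "\<exists>\<epsilon>>0. \<exists>C>0. \<exists>L::real. 0 < L \<and> L < 1 \<and>
    (\<forall>(u::complex) (x::complex) (k::nat). norm u \<le> 1 \<longrightarrow> norm x \<le> rho + \<epsilon> \<longrightarrow>
        norm (Sigmak k x u) \<le> C * norm (u - 1) * L ^ k)"
proof -
  have r16: "1/16 \<le> rho" by (rule rho_ge)
  have r25: "rho \<le> 2/5" by (rule rho_le)
  define R where "R = 99/100 * rho"
  define \<epsilon> where "\<epsilon> = rho / 100"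
  define s where "s = (101/100 * rho) ^ 2"
  have R0: "0 < R" and Rr: "R < rho" and R1: "R < 1" using r16 r25 by (auto simp: R_def)
  have RC: "ereal R < CR" using Rr by (simp add: CR_eq)
  have YR0: "0 \<le> Yr R" using Yr_nonneg[OF _ RC] R0 by simp
  have YR1: "Yr R < 1" by (rule Yr_lt1[OF R0 Rr])
  define K0 where "K0 = Yr R / R"
  define M where "M = Yr R / (R * (1 - R))"
  have K00: "0 \<le> K0" using YR0 R0 by (simp add: K0_def)
  have M0: "0 \<le> M" using YR0 R0 R1 by (simp add: M_def)
  have s0: "0 < s" using r16 by (simp add: s_def)
  have sR: "s \<le> R"
  proof -
    have "s = (10201/10000 * rho) * rho" by (simp add: s_def power2_eq_square)
    also have "\<dots> \<le> (99/100) * rho" using r16 r25 by (intro mult_right_mono) auto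
    finally show ?thesis by (simp add: R_def)
  qed
  have sRR: "s \<le> R * (1 - R)"
  proof -
    have "s = (10201/10000 * rho) * rho" by (simp add: s_def power2_eq_square)
    also have "\<dots> \<le> (99/100 * (1 - 99/100 * rho)) * rho" using r16 r25 by (intro mult_right_mono) auto
    finally show ?thesis by (simp add: R_def algebra_simps)
  qed
  have RR0: "0 < R * (1 - R)" using R0 R1 by simp
  have Ms1: "M * s < 1"
  proof -
    have "M * s = Yr R * (s / (R * (1 - R)))" by (simp add: M_def)
    also have "\<dots> < 1 * (s / (R * (1 - R)))" using YR1 s0 RR0 by (intro mult_strict_right_mono) auto
    also have "\<dots> \<le> 1" using sRR RR0 by simp
    finally show ?thesis .
  qed
  define L where "L = max (M * s) (1/2)"
  define C where "C = 2 * K0 * s + 1"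
  have L0: "0 < L" and L1: "L < 1" using Ms1 by (auto simp: L_def)
  have "0 \<le> 2 * K0 * s" using K00 s0 by (intro mult_nonneg_nonneg) auto
  then have C0: "0 < C" by (simp add: C_def)
  have IND': "\<And>z v. norm z \<le> R \<Longrightarrow> norm v \<le> 1 \<Longrightarrow> norm (wk k z v) \<le> K0 * M ^ k * norm (v - 1) * norm z ^ (k + 1)" for k
    using IND[OF R0 Rr, of k] unfolding K0_def M_def by blast
  have e0: "0 < \<epsilon>" using r16 by (simp add: \<epsilon>_def)
  have P: "\<forall>(u::complex) (x::complex) (k::nat). norm u \<le> 1 \<longrightarrow> norm x \<le> rho + \<epsilon> \<longrightarrow>
        norm (Sigmak k x u) \<le> C * norm (u - 1) * L ^ k"
  proof (intro allI impI)
    fix u x :: complex and k :: nat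
    assume u: "norm u \<le> 1" and x: "norm x \<le> rho + \<epsilon>"
    define q where "q = norm x"
    have q0: "0 \<le> q" and qb: "q \<le> 101/100 * rho" using x by (auto simp: q_def \<epsilon>_def)
    have qh: "q \<le> 1/2" using qb r25 by simp
    have q2: "q ^ 2 \<le> s" unfolding s_def by (rule power_mono[OF qb q0])
    define c where "c = K0 * M ^ k * norm (u - 1) * s ^ (k + 1)"
    have c0: "0 \<le> c" using K00 M0 s0 by (simp add: c_def)
    define g where "g i = c * q ^ i" for i
    have gs: "g sums (c / (1 - q))"
    proof -
      have "(\<lambda>i. q ^ i * c) sums (1 / (1 - q) * c)"
        by (rule sums_mult2[OF geometric_sums]) (use q0 qh in simp)
      then show ?thesis unfolding g_def by (simp add: mult.commute)
    qed
    define f where "f i = wk k (x ^ (i + 2)) (u ^ (i + 2)) / of_nat (i + 2)" for i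
    have fb: "norm (f i) \<le> g i" for i
    proof -
      have nz: "norm (x ^ (i + 2)) = q ^ (i + 2)" by (simp only: q_def norm_power)
      have qi: "q ^ (i + 2) \<le> R"
      proof -
        have "q ^ (i + 2) = q ^ 2 * q ^ i" by (metis power_add mult.commute)
        also have "\<dots> \<le> s * 1" using q2 q0 qh s0 by (intro mult_mono) (auto simp: power_le_one)
        finally show ?thesis using sR by simp
      qed
      have ui: "norm (u ^ (i + 2)) \<le> 1" unfolding norm_power by (rule power_le_one) (use u in auto)
      have W: "norm (wk k (x ^ (i + 2)) (u ^ (i + 2))) \<le> K0 * M ^ k * norm (u ^ (i + 2) - 1) * (q ^ (i + 2)) ^ (k + 1)"
        using IND'[of "x ^ (i + 2)" "u ^ (i + 2)" k] nz qi ui by simp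
      have nd: "norm (f i) = norm (wk k (x ^ (i + 2)) (u ^ (i + 2))) / real (i + 2)"
        unfolding f_def by (simp only: norm_divide norm_of_nat)
      also have "\<dots> \<le> (K0 * M ^ k * (real (i + 2) * norm (u - 1)) * (q ^ (i + 2)) ^ (k + 1)) / real (i + 2)"
      proof (rule divide_right_mono)
        show "norm (wk k (x ^ (i + 2)) (u ^ (i + 2))) \<le> K0 * M ^ k * (real (i + 2) * norm (u - 1)) * (q ^ (i + 2)) ^ (k + 1)"
          using W vpow[OF u, of "i + 2"] K00 M0 q0
          by (meson order_trans mult_left_mono mult_right_mono mult_nonneg_nonneg zero_le_power norm_ge_zero)
      qed simp
      also have "\<dots> = K0 * M ^ k * norm (u - 1) * (q ^ (i + 2)) ^ (k + 1)" by simp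
      also have "\<dots> \<le> K0 * M ^ k * norm (u - 1) * (s ^ (k + 1) * q ^ i)"
      proof (rule mult_left_mono)
        have qq: "q ^ (i + 2) = q ^ 2 * q ^ i" by (metis power_add mult.commute)
        have "(q ^ (i + 2)) ^ (k + 1) = (q ^ 2) ^ (k + 1) * (q ^ i) ^ (k + 1)"
          by (simp only: qq power_mult_distrib)
        also have "\<dots> \<le> s ^ (k + 1) * q ^ i"
        proof (rule mult_mono)
          show "(q ^ 2) ^ (k + 1) \<le> s ^ (k + 1)" by (rule power_mono[OF q2]) simp
          have "(q ^ i) ^ (k + 1) \<le> (q ^ i) ^ 1" by (rule power_decreasing) (use q0 qh in \<open>auto simp: power_le_one\<close>)
          then show "(q ^ i) ^ (k + 1) \<le> q ^ i" by simp
        qed (use s0 q0 in auto)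
        finally show "(q ^ (i + 2)) ^ (k + 1) \<le> s ^ (k + 1) * q ^ i" .
      qed (use K00 M0 in simp)
      also have "\<dots> = g i" by (simp add: g_def c_def)
      finally show ?thesis .
    qed
    have fns: "summable (\<lambda>i. norm (f i))"
      by (rule summable_comparison_test[OF _ sums_summable[OF gs]]) (use fb in auto)
    have "norm (Sigmak k x u) = norm (suminf f)" by (simp only: Sigmak_def f_def[abs_def])
    also have "\<dots> \<le> (\<Sum>i. norm (f i))" by (rule summable_norm[OF fns])
    also have "\<dots> \<le> (\<Sum>i. g i)" by (rule suminf_le[OF fb fns sums_summable[OF gs]])
    also have "\<dots> = c / (1 - q)" using gs by (simp add: sums_iff)
    also have "\<dots> \<le> c / (1/2)" using c0 q0 qh by (intro divide_left_mono) auto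
    also have "\<dots> = 2 * c" by simp
    also have "\<dots> = (2 * K0 * s) * norm (u - 1) * (M * s) ^ k"
      by (simp add: c_def power_mult_distrib algebra_simps)
    also have "\<dots> \<le> C * norm (u - 1) * L ^ k"
    proof (intro mult_mono)
      show "2 * K0 * s \<le> C" by (simp add: C_def)
      show "(M * s) ^ k \<le> L ^ k" by (rule power_mono) (use M0 s0 in \<open>auto simp: L_def\<close>)
    qed (use K00 s0 C0 L0 M0 in auto)
    finally show "norm (Sigmak k x u) \<le> C * norm (u - 1) * L ^ k" .
  qed
  show ?thesis using P e0 C0 L0 L1 by blast
qed


end
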